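(* For every fixed positive integer $d$, let $f_d(n)$ be the largest integer such that every poset on $n$ elements has a subposet on $f_d(n)$ elements of dimension at most $d$. Then \[ f_d(n) = O\left(n^{\frac{d}{d+1}}\right) \quad (n\to\infty), \] where the implied constant may depend on $d$.
   Context: A subposet of a poset $P$ is a subset of its ground set with the order induced from $P$. The dimension of a poset $P$ is the least integer $d$ such that there are $d$ linear extensions of $P$ whose intersection is $P$ (equivalently, the least $d$ such that $P$ embeds into $\mathbb{R}^d$ with the coordinatewise product order). *)

theory Defs
  imports Main "HOL-Library.Landau_Symbols"
begin

definition linear_extension :: "'a set \<Rightarrow> 'a rel \<Rightarrow> 'a rel \<Rightarrow> bool" where
  "linear_extension A r L \<longleftrightarrow> linear_order_on A L \<and> r \<subseteq> L"

definition realizer :: "'a set \<Rightarrow> 'a rel \<Rightarrow> nat \<Rightarrow> (nat \<Rightarrow> 'a rel) \<Rightarrow> bool" where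
  "realizer A r k L \<longleftrightarrow>
     (\<forall>i<k. linear_extension A r (L i)) \<and> r = {p \<in> A \<times> A. \<forall>i<k. p \<in> L i}"

definition poset_dim :: "'a set \<Rightarrow> 'a rel \<Rightarrow> nat" where
  "poset_dim A r = (LEAST k. \<exists>L. realizer A r k L)"

definition induced :: "'a rel \<Rightarrow> 'a set \<Rightarrow> 'a rel" where
  "induced r S = r \<inter> (S \<times> S)"

text \<open>f_d(n): the largest m such that every poset on n elements (w.l.o.g. with
  ground set {..<n}) has a subposet on m elements of dimension at most d.\<close>
definition f_dim :: "nat \<Rightarrow> nat \<Rightarrow> nat" where
  "f_dim d n = (GREATEST m. \<forall>r. partial_order_on {..<n} r \<longrightarrow>
       (\<exists>S \<subseteq> {..<n}. card S = m \<and> poset_dim S (induced r S) \<le> d))"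

end

theory Submission
  imports Defs "HOL-Library.FuncSet"
begin


lemma rank_match:
  fixes A B :: "nat set"
  assumes "finite A" "finite B" "card A \<le> card B"
  shows "\<exists>f. f ` A \<subseteq> B \<and> (\<forall>a\<in>A. \<forall>a'\<in>A. a < a' \<longrightarrow> f a < f a')"
  using assms
proof (induction "card A" arbitrary: A B)
  case 0
  then show ?case by auto
next
  case (Suc n)
  then have "A \<noteq> {}" "B \<noteq> {}" by auto
  define a0 where "a0 = Max A"
  define b0 where "b0 = Max B"
  have a0: "a0 \<in> A" "\<And>a. a \<in> A \<Longrightarrow> a \<le> a0" using Suc \<open>A \<noteq> {}\<close> by (auto simp: a0_def)
  have b0: "b0 \<in> B" "\<And>b. b \<in> B \<Longrightarrow> b \<le> b0" using Suc \<open>B \<noteq> {}\<close> by (auto simp: b0_def)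
  have "n = card (A - {a0})" using Suc a0 by auto
  moreover have "card (A - {a0}) \<le> card (B - {b0})" using Suc a0 b0 by auto
  ultimately obtain f where f: "f ` (A - {a0}) \<subseteq> B - {b0}"
    "\<forall>a\<in>A - {a0}. \<forall>a'\<in>A - {a0}. a < a' \<longrightarrow> f a < f a'"
    using Suc by (metis finite_Diff)
  have lt: "f a < b0" if "a \<in> A - {a0}" for a
    using f(1) b0 that by (metis Diff_iff image_subset_iff insertI1 le_neq_implies_less)
  show ?case
  proof (intro exI[of _ "f(a0 := b0)"] conjI ballI impI)
    show "(f(a0 := b0)) ` A \<subseteq> B" using f(1) b0 by auto
  next
    fix a a' assume "a \<in> A" "a' \<in> A" "a < a'"
    then show "(f(a0 := b0)) a < (f(a0 := b0)) a'"
      using f(2) lt a0(1) a0(2)[OF \<open>a' \<in> A\<close>] by (cases "a' = a0") auto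
  qed
qed




definition grid :: "'c set \<Rightarrow> nat \<Rightarrow> ('c \<Rightarrow> nat) set" where
  "grid D m = (\<Pi>\<^sub>E c\<in>D. {..<m})"

definition contains :: "'c set \<Rightarrow> 'i set \<Rightarrow> ('c \<Rightarrow> 'i \<Rightarrow> nat) \<Rightarrow> ('c \<Rightarrow> nat) set \<Rightarrow> bool" where
  "contains D I \<pi> X \<longleftrightarrow> (\<exists>\<phi>. (\<forall>i\<in>I. \<phi> i \<in> X) \<and>
      (\<forall>c\<in>D. \<forall>i\<in>I. \<forall>j\<in>I. \<pi> c i < \<pi> c j \<longrightarrow> \<phi> i c < \<phi> j c))"

lemma finite_grid: "finite D \<Longrightarrow> finite (grid D m)"
  unfolding grid_def by (rule finite_PiE) auto

lemma card_grid: "finite D \<Longrightarrow> card (grid D m) = m ^ card D"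
  unfolding grid_def by (simp add: card_PiE)

lemma contains_empty: "I = {} \<Longrightarrow> contains D I \<pi> X"
  unfolding contains_def by auto

lemma base_case:
  assumes "X \<subseteq> grid {c} m" "finite I" "card I \<le> card X"
  shows "contains {c} I \<pi> X"
proof -
  have injX: "inj_on (\<lambda>x. x c) X"
  proof (rule inj_onI)
    fix x y assume "x \<in> X" "y \<in> X" "x c = y c"
    then show "x = y" using assms(1) unfolding grid_def by (intro PiE_ext[of x "{c}" _ y]) auto
  qed
  have finX: "finite X" using assms(1) finite_grid[of "{c}" m] finite_subset by auto
  have "card (\<pi> c ` I) \<le> card ((\<lambda>x. x c) ` X)"
    using card_image_le[OF assms(2), of "\<pi> c"] assms(3) card_image[OF injX] by auto
  then obtain g where g: "g ` (\<pi> c ` I) \<subseteq> (\<lambda>x. x c) ` X"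
     "\<forall>a\<in>\<pi> c ` I. \<forall>a'\<in>\<pi> c ` I. a < a' \<longrightarrow> g a < g a'"
    using rank_match[of "\<pi> c ` I" "(\<lambda>x. x c) ` X"] assms(2) finX by auto
  define \<phi> where "\<phi> i = the_inv_into X (\<lambda>x. x c) (g (\<pi> c i))" for i
  have ph: "\<phi> i \<in> X \<and> \<phi> i c = g (\<pi> c i)" if "i \<in> I" for i
  proof -
    have "g (\<pi> c i) \<in> (\<lambda>x. x c) ` X" using g(1) that by auto
    then show ?thesis unfolding \<phi>_def
      using the_inv_into_into[OF injX] f_the_inv_into_f[OF injX] by auto
  qed
  show ?thesis unfolding contains_def
    by (rule exI[of _ \<phi>]) (use ph g(2) in auto)
qed




lemma div_less_cancel: "(a::nat) div t < b div t \<Longrightarrow> a < b"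
  by (meson div_le_mono not_le)

lemma block_step:
  fixes D :: "'c set" and I :: "'i set"
  assumes finD: "finite D" and finI: "finite I" and t: "t \<ge> 1"
    and IHl: "\<And>i Y. i \<in> D \<Longrightarrow> Y \<subseteq> grid (D - {i}) M \<Longrightarrow> \<not> contains (D - {i}) I \<pi> Y \<Longrightarrow> card Y \<le> Cl"
    and IHb: "\<And>Y. Y \<subseteq> grid D M \<Longrightarrow> \<not> contains D I \<pi> Y \<Longrightarrow> card Y \<le> Cb"
    and XG: "X \<subseteq> grid D (M * t)" and Xn: "\<not> contains D I \<pi> X"
  shows "card X \<le> card D * (M * ((t choose card I) * Cl)) * t ^ card D + Cb * (card I - 1) ^ card D"
proof -
  define N where "N = card I"
  define blk where "blk x = (\<lambda>c\<in>D. x c div t)" for x :: "'c \<Rightarrow> nat"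
  define B where "B = blk ` X"
  define Xb where "Xb b = {x \<in> X. blk x = b}" for b
  define H where "H i b = (\<lambda>x. x i mod t) ` Xb b" for i b
  have finX: "finite X" using XG finite_grid[OF finD] finite_subset by blast
  have finB: "finite B" using finX B_def by auto
  have Xpie: "x \<in> (\<Pi>\<^sub>E c\<in>D. {..<M*t})" if "x \<in> X" for x using XG that unfolding grid_def by auto
  have decomp: "x c = (blk x) c * t + x c mod t" if "c \<in> D" for x c
    using that unfolding blk_def by simp
  have BG: "B \<subseteq> grid D M"
  proof
    fix b assume "b \<in> B"
    then obtain x where x: "x \<in> X" "b = blk x" unfolding B_def by auto
    have "x c div t < M" if "c \<in> D" for c
      using Xpie[OF x(1)] that less_mult_imp_div_less by (auto simp: PiE_iff)
    then show "b \<in> grid D M" unfolding grid_def x(2) blk_def by auto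
  qed
  have Bn: "\<not> contains D I \<pi> B"
  proof
    assume "contains D I \<pi> B"
    then obtain \<psi> where \<psi>: "\<forall>i\<in>I. \<psi> i \<in> B" "\<forall>c\<in>D. \<forall>i\<in>I. \<forall>j\<in>I. \<pi> c i < \<pi> c j \<longrightarrow> \<psi> i c < \<psi> j c"
      unfolding contains_def by auto
    define \<phi> where "\<phi> i = (SOME x. x \<in> X \<and> blk x = \<psi> i)" for i
    have ph: "\<phi> i \<in> X \<and> blk (\<phi> i) = \<psi> i" if "i \<in> I" for i
    proof -
      have "\<psi> i \<in> blk ` X" using \<psi>(1) that B_def by auto
      then have "\<exists>x. x \<in> X \<and> blk x = \<psi> i" by (metis imageE)
      from someI_ex[OF this] show ?thesis by (simp add: \<phi>_def)
    qed
    have "contains D I \<pi> X" unfolding contains_def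
    proof (intro exI[of _ \<phi>] conjI ballI impI)
      fix i assume "i \<in> I" then show "\<phi> i \<in> X" using ph by auto
    next
      fix c i j assume c: "c \<in> D" and ij: "i \<in> I" "j \<in> I" and lt: "\<pi> c i < \<pi> c j"
      have "blk (\<phi> i) c < blk (\<phi> j) c" using ph ij \<psi>(2) c lt by auto
      then show "\<phi> i c < \<phi> j c" using c unfolding blk_def by (auto intro: div_less_cancel)
    qed
    then show False using Xn by simp
  qed
  have cardB: "card B \<le> Cb" using IHb[OF BG Bn] .
  have finXb: "finite (Xb b)" for b using finX unfolding Xb_def by auto
  have inj_off: "inj_on (\<lambda>x. \<lambda>c\<in>D. x c mod t) (Xb b)" for b
  proof (rule inj_onI)
    fix x y assume xy: "x \<in> Xb b" "y \<in> Xb b" "(\<lambda>c\<in>D. x c mod t) = (\<lambda>c\<in>D. y c mod t)"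
    show "x = y"
    proof (rule PiE_ext[OF Xpie Xpie])
      show "x \<in> X" "y \<in> X" using xy unfolding Xb_def by auto
      fix c assume c: "c \<in> D"
      have "x c mod t = y c mod t" using fun_cong[OF xy(3), of c] c by simp
      moreover have "blk x = blk y" using xy unfolding Xb_def by auto
      ultimately show "x c = y c" using decomp[OF c, of x] decomp[OF c, of y] by simp
    qed
  qed
  have card_Xb_H: "card (Xb b) \<le> (\<Prod>i\<in>D. card (H i b))" for b
  proof -
    have "card (Xb b) = card ((\<lambda>x. \<lambda>c\<in>D. x c mod t) ` Xb b)" using card_image[OF inj_off] by simp
    also have "\<dots> \<le> card (\<Pi>\<^sub>E i\<in>D. H i b)"
      by (rule card_mono) (auto intro!: finite_PiE finD simp: H_def finXb)
    also have "\<dots> = (\<Prod>i\<in>D. card (H i b))" by (simp add: card_PiE finD)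
    finally show ?thesis .
  qed
  have card_Xb_t: "card (Xb b) \<le> t ^ card D" for b
  proof -
    have "card (Xb b) = card ((\<lambda>x. \<lambda>c\<in>D. x c mod t) ` Xb b)" using card_image[OF inj_off] by simp
    also have "\<dots> \<le> card (grid D t)"
      by (rule card_mono) (use t finite_grid[OF finD, of t] in \<open>auto simp: grid_def\<close>)
    also have "\<dots> = t ^ card D" by (simp add: card_grid finD)
    finally show ?thesis .
  qed
  have Hsub: "H i b \<subseteq> {..<t}" for i b using t unfolding H_def by auto
  define W where "W i = {b \<in> B. N \<le> card (H i b)}" for i
  have cardW: "card (W i) \<le> M * ((t choose N) * Cl)" if iD: "i \<in> D" for i
  proof -
    define Sel where "Sel b = (SOME S. S \<subseteq> H i b \<and> card S = N)" for b
    have Sel: "Sel b \<subseteq> H i b \<and> card (Sel b) = N" if "b \<in> W i" for b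
    proof -
      from that have "N \<le> card (H i b)" unfolding W_def by auto
      then obtain S where "S \<subseteq> H i b" "card S = N" by (rule obtain_subset_with_card_n)
      then have "\<exists>S. S \<subseteq> H i b \<and> card S = N" by blast
      from someI_ex[OF this] show ?thesis by (simp add: Sel_def)
    qed
    define Wh where "Wh h S = {b \<in> W i. b i = h \<and> Sel b = S}" for h S
    define SS where "SS = {S. S \<subseteq> {..<t} \<and> card S = N}"
    have cover: "W i \<subseteq> (\<Union>h\<in>{..<M}. \<Union>S\<in>SS. Wh h S)"
    proof
      fix b assume b: "b \<in> W i"
      then have "b \<in> grid D M" using BG W_def by auto
      then have "b i < M" using iD unfolding grid_def by auto
      moreover have "Sel b \<in> SS" using Sel[OF b] Hsub unfolding SS_def by auto
      ultimately show "b \<in> (\<Union>h\<in>{..<M}. \<Union>S\<in>SS. Wh h S)" using b unfolding Wh_def by auto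
    qed
    have finSS: "finite SS" unfolding SS_def by (rule finite_subset[of _ "Pow {..<t}"]) auto
    have cardSS: "card SS = t choose N" unfolding SS_def using n_subsets[of "{..<t}" N] by simp
    have cardWh: "card (Wh h S) \<le> Cl" if S: "S \<in> SS" for h S
    proof -
      define proj where "proj b = restrict b (D - {i})" for b :: "'c \<Rightarrow> nat"
      have WhB: "Wh h S \<subseteq> B" unfolding Wh_def W_def by auto
      have inj: "inj_on proj (Wh h S)"
      proof (rule inj_onI)
        fix b b' assume bb: "b \<in> Wh h S" "b' \<in> Wh h S" "proj b = proj b'"
        have G: "b \<in> grid D M" "b' \<in> grid D M" using bb WhB BG by auto
        show "b = b'"
        proof (rule PiE_ext[of b D "\<lambda>_. {..<M}" b'])
          show "b \<in> (\<Pi>\<^sub>E c\<in>D. {..<M})" "b' \<in> (\<Pi>\<^sub>E c\<in>D. {..<M})" using G unfolding grid_def by auto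
          fix c assume c: "c \<in> D"
          show "b c = b' c"
          proof (cases "c = i")
            case True then show ?thesis using bb unfolding Wh_def by auto
          next
            case False then show ?thesis using fun_cong[OF bb(3), of c] c unfolding proj_def by auto
          qed
        qed
      qed
      have PG: "proj ` Wh h S \<subseteq> grid (D - {i}) M"
      proof
        fix y assume "y \<in> proj ` Wh h S"
        then obtain b where b: "b \<in> Wh h S" "y = proj b" by auto
        then have "b \<in> grid D M" using WhB BG by auto
        then have "b \<in> D \<rightarrow>\<^sub>E {..<M}" unfolding grid_def .
        then show "y \<in> grid (D - {i}) M" unfolding grid_def b(2) proj_def
          by (subst restrict_PiE_iff) (auto simp: PiE_iff)
      qed
      have Pn: "\<not> contains (D - {i}) I \<pi> (proj ` Wh h S)"
      proof
        assume "contains (D - {i}) I \<pi> (proj ` Wh h S)"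
        then obtain \<psi> where \<psi>: "\<forall>l\<in>I. \<psi> l \<in> proj ` Wh h S"
          "\<forall>c\<in>D - {i}. \<forall>l\<in>I. \<forall>l'\<in>I. \<pi> c l < \<pi> c l' \<longrightarrow> \<psi> l c < \<psi> l' c"
          unfolding contains_def by auto
        have cS: "card (\<pi> i ` I) \<le> card S" using S card_image_le[OF finI, of "\<pi> i"] unfolding SS_def N_def by auto
        have finS: "finite S" using S unfolding SS_def by (auto intro: finite_subset)
        obtain g where g: "g ` (\<pi> i ` I) \<subseteq> S"
          "\<forall>a\<in>\<pi> i ` I. \<forall>a'\<in>\<pi> i ` I. a < a' \<longrightarrow> g a < g a'"
          using rank_match[OF _ finS cS] finI by auto
        define bl where "bl l = (SOME b. b \<in> Wh h S \<and> proj b = \<psi> l)" for l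
        have bl: "bl l \<in> Wh h S \<and> proj (bl l) = \<psi> l" if "l \<in> I" for l
        proof -
          have "\<psi> l \<in> proj ` Wh h S" using \<psi>(1) that by blast
          then have "\<exists>b. b \<in> Wh h S \<and> proj b = \<psi> l" by (metis imageE)
          from someI_ex[OF this] show ?thesis by (simp add: bl_def)
        qed
        define \<phi> where "\<phi> l = (SOME x. x \<in> Xb (bl l) \<and> x i mod t = g (\<pi> i l))" for l
        have ph: "\<phi> l \<in> Xb (bl l) \<and> \<phi> l i mod t = g (\<pi> i l)" if l: "l \<in> I" for l
        proof -
          have bW: "bl l \<in> W i" and selS: "Sel (bl l) = S" using bl[OF l] unfolding Wh_def by auto
          have "g (\<pi> i l) \<in> H i (bl l)" using g(1) l Sel[OF bW] selS by auto
          then have "\<exists>x. x \<in> Xb (bl l) \<and> x i mod t = g (\<pi> i l)" unfolding H_def by auto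
          from someI_ex[OF this] show ?thesis by (simp add: \<phi>_def)
        qed
        have "contains D I \<pi> X" unfolding contains_def
        proof (intro exI[of _ \<phi>] conjI ballI impI)
          fix l assume "l \<in> I" then show "\<phi> l \<in> X" using ph unfolding Xb_def by auto
        next
          fix c l l' assume c: "c \<in> D" and ll: "l \<in> I" "l' \<in> I" and lt: "\<pi> c l < \<pi> c l'"
          have bk: "blk (\<phi> l) = bl l" "blk (\<phi> l') = bl l'" using ph ll unfolding Xb_def by auto
          show "\<phi> l c < \<phi> l' c"
          proof (cases "c = i")
            case True
            have hh: "bl l i = h" "bl l' i = h" using bl ll unfolding Wh_def by auto
            have "\<phi> l i mod t < \<phi> l' i mod t" using ph ll g(2) lt True by auto
            then show ?thesis using decomp[OF iD, of "\<phi> l"] decomp[OF iD, of "\<phi> l'"] bk hh True by simp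
          next
            case False
            have "\<psi> l c < \<psi> l' c" using \<psi>(2) c False ll lt by auto
            moreover have "restrict (bl l) (D - {i}) c = \<psi> l c" "restrict (bl l') (D - {i}) c = \<psi> l' c"
              using bl[OF ll(1)] bl[OF ll(2)] unfolding proj_def by simp_all
            ultimately have "bl l c < bl l' c" using c False by simp
            then have "\<phi> l c div t < \<phi> l' c div t"
              using fun_cong[OF bk(1), of c] fun_cong[OF bk(2), of c] c unfolding blk_def by simp
            then show ?thesis by (rule div_less_cancel)
          qed
        qed
        then show False using Xn by simp
      qed
      have "card (Wh h S) = card (proj ` Wh h S)" using card_image[OF inj] by simp
      also have "\<dots> \<le> Cl" using IHl[OF iD PG Pn] .
      finally show ?thesis .
    qed
    have finU: "finite (\<Union>h\<in>{..<M}. \<Union>S\<in>SS. Wh h S)"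
      by (intro finite_UN_I finite_lessThan finSS) (rule finite_subset[OF _ finB], auto simp: Wh_def W_def)
    have "card (W i) \<le> card (\<Union>h\<in>{..<M}. \<Union>S\<in>SS. Wh h S)"
      by (rule card_mono[OF finU cover])
    also have "\<dots> \<le> (\<Sum>h\<in>{..<M}. card (\<Union>S\<in>SS. Wh h S))" by (rule card_UN_le) auto
    also have "\<dots> \<le> (\<Sum>h\<in>{..<M}. (\<Sum>S\<in>SS. card (Wh h S)))"
      by (rule sum_mono) (rule card_UN_le[OF finSS])
    also have "\<dots> \<le> (\<Sum>h\<in>{..<M}. (\<Sum>S\<in>SS. Cl))"
      by (intro sum_mono cardWh)
    also have "\<dots> = M * ((t choose N) * Cl)" using cardSS by simp
    finally show ?thesis .
  qed
  define WW where "WW = (\<Union>i\<in>D. W i)"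
  have finWW: "finite WW" by (rule finite_subset[OF _ finB]) (auto simp: WW_def W_def)
  have cardWW: "card WW \<le> card D * (M * ((t choose N) * Cl))"
  proof -
    have "card WW \<le> (\<Sum>i\<in>D. card (W i))" unfolding WW_def by (rule card_UN_le[OF finD])
    also have "\<dots> \<le> (\<Sum>i\<in>D. M * ((t choose N) * Cl))" by (intro sum_mono cardW)
    finally show ?thesis by simp
  qed
  have narrow: "card (Xb b) \<le> (N - 1) ^ card D" if "b \<in> B - WW" for b
  proof -
    have "card (H i b) \<le> N - 1" if "i \<in> D" for i
      using \<open>b \<in> B - WW\<close> that unfolding WW_def W_def by auto
    then have "(\<Prod>i\<in>D. card (H i b)) \<le> (\<Prod>i\<in>D. N - 1)" by (intro prod_mono) auto
    then show ?thesis using card_Xb_H[of b] by simp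
  qed
  have finU: "finite (\<Union>b\<in>B. Xb b)" using finB finXb by blast
  have "card X \<le> card (\<Union>b\<in>B. Xb b)"
    by (rule card_mono[OF finU]) (auto simp: Xb_def B_def)
  also have "\<dots> \<le> (\<Sum>b\<in>B. card (Xb b))" by (rule card_UN_le[OF finB])
  also have "\<dots> = (\<Sum>b\<in>B \<inter> WW. card (Xb b)) + (\<Sum>b\<in>B - WW. card (Xb b))"
    using finB by (metis sum.Int_Diff)
  also have "\<dots> \<le> (\<Sum>b\<in>B \<inter> WW. t ^ card D) + (\<Sum>b\<in>B - WW. (N - 1) ^ card D)"
    by (intro add_mono sum_mono card_Xb_t narrow)
  also have "\<dots> = card (B \<inter> WW) * t ^ card D + card (B - WW) * (N - 1) ^ card D" by simp
  also have "\<dots> \<le> card WW * t ^ card D + Cb * (N - 1) ^ card D"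
  proof (intro add_mono mult_le_mono1)
    show "card (B \<inter> WW) \<le> card WW" by (rule card_mono[OF finWW]) auto
    show "card (B - WW) \<le> Cb" using cardB card_mono[OF finB, of "B - WW"] by auto
  qed
  also have "\<dots> \<le> card D * (M * ((t choose N) * Cl)) * t ^ card D + Cb * (N - 1) ^ card D"
    using cardWW by (intro add_mono mult_le_mono1) auto
  finally show ?thesis unfolding N_def .
qed




lemma exists_pow_between:
  fixes t m :: nat
  assumes "t \<ge> 2" "m \<ge> 1"
  shows "\<exists>j. m \<le> t ^ j \<and> t ^ j \<le> t * m"
proof -
  have ex: "\<exists>j. m \<le> t ^ j"
  proof
    have "m < 2 ^ m" by (rule less_exp)
    also have "\<dots> \<le> t ^ m" using assms(1) by (intro power_mono) auto
    finally show "m \<le> t ^ m" by simp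
  qed
  define j where "j = (LEAST j. m \<le> t ^ j)"
  have j1: "m \<le> t ^ j" unfolding j_def using LeastI_ex[OF ex] .
  show ?thesis
  proof (cases j)
    case 0
    then show ?thesis using j1 assms by (intro exI[of _ j]) auto
  next
    case (Suc j')
    have "\<not> m \<le> t ^ j'" using not_less_Least[of j' "\<lambda>j. m \<le> t ^ j"] Suc unfolding j_def by auto
    then have "t ^ j \<le> t * m" using Suc by simp
    then show ?thesis using j1 by blast
  qed
qed

lemma arith_key:
  fixes K C0 t N k d :: nat
  assumes "t = 2 * (N - 1) ^ k + 2" "C0 = 2 * K * t ^ k + 1"
  shows "K * t ^ k + C0 * (N - 1) ^ k \<le> C0 * t ^ Suc d"
proof -
  have "1 \<le> t ^ d" using assms(1) by (simp add: one_le_power)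
  then have "t \<le> t ^ Suc d" by (metis mult_le_mono2 mult_1_right power_Suc)
  then have "C0 * t \<le> C0 * t ^ Suc d" by simp
  moreover have "C0 * t = 2 * C0 * (N - 1) ^ k + 2 * C0" using assms(1) by (simp add: algebra_simps)
  moreover have "K * t ^ k \<le> 2 * C0" using assms(2) by simp
  ultimately show ?thesis by linarith
qed

lemma extremal:
  fixes \<pi> :: "'c \<Rightarrow> 'i \<Rightarrow> nat" and I :: "'i set"
  assumes finI: "finite I"
  shows "finite D \<Longrightarrow> card D = Suc d \<Longrightarrow>
    \<exists>C. \<forall>m X. X \<subseteq> grid D m \<longrightarrow> \<not> contains D I \<pi> X \<longrightarrow> card X \<le> C * m ^ d"
proof (induction d arbitrary: D)
  case 0
  then have "card D = 1" by simp
  then obtain c where D: "D = {c}" by (rule card_1_singletonE)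
  show ?case
  proof (intro exI[of _ "card I"] allI impI)
    fix m X assume "X \<subseteq> grid D m" "\<not> contains D I \<pi> X"
    then have "\<not> card I \<le> card X" using base_case[of X c m I \<pi>] D finI by auto
    then show "card X \<le> card I * m ^ 0" by simp
  qed
next
  case (Suc d)
  show ?case
  proof (cases "I = {}")
    case True
    then show ?thesis using contains_empty by blast
  next
    case Ine: False
    note finD = Suc.prems(1)
    have "\<forall>i\<in>D. \<exists>C. \<forall>m X. X \<subseteq> grid (D - {i}) m \<longrightarrow> \<not> contains (D - {i}) I \<pi> X \<longrightarrow> card X \<le> C * m ^ d"
      using Suc.IH Suc.prems by auto
    then obtain Cf where Cf: "\<And>i m X. i \<in> D \<Longrightarrow> X \<subseteq> grid (D - {i}) m \<Longrightarrow> \<not> contains (D - {i}) I \<pi> X \<Longrightarrow> card X \<le> Cf i * m ^ d"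
      by metis
    define C' where "C' = (\<Sum>i\<in>D. Cf i)"
    have Cl: "card Y \<le> C' * M ^ d" if "i \<in> D" "Y \<subseteq> grid (D - {i}) M" "\<not> contains (D - {i}) I \<pi> Y" for i Y M
    proof -
      have "Cf i \<le> C'" unfolding C'_def using Suc.prems(1) that(1) by (intro member_le_sum) auto
      then show ?thesis using Cf[OF that] by (meson le_trans mult_le_mono1)
    qed
    define N where "N = card I"
    define k where "k = card D"
    define t where "t = 2 * (N - 1) ^ k + 2"
    define K where "K = k * (t choose N) * C'"
    define C0 where "C0 = 2 * K * t ^ k + 1"
    have t1: "t \<ge> 2" unfolding t_def by simp
    have kD: "k = Suc (Suc d)" unfolding k_def using Suc.prems by simp
    have main: "\<forall>X. X \<subseteq> grid D (t ^ j) \<longrightarrow> \<not> contains D I \<pi> X \<longrightarrow> card X \<le> C0 * t ^ (j * Suc d)" for j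
    proof (induction j)
      case 0
      show ?case
      proof (intro allI impI)
        fix X assume "X \<subseteq> grid D (t ^ 0)"
        then have "card X \<le> card (grid D 1)" using card_mono[OF finite_grid[OF finD]] by auto
        also have "\<dots> = 1" using card_grid[OF finD] by simp
        finally show "card X \<le> C0 * t ^ (0 * Suc d)" unfolding C0_def by simp
      qed
    next
      case (Suc j)
      show ?case
      proof (intro allI impI)
        fix X assume XG: "X \<subseteq> grid D (t ^ Suc j)" and Xn: "\<not> contains D I \<pi> X"
        define M where "M = t ^ j"
        define P where "P = t ^ (j * Suc d)"
        have MP: "M * M ^ d = P" unfolding M_def P_def by (simp add: power_mult[symmetric] algebra_simps power_add[symmetric])
        have "card X \<le> card D * (M * ((t choose card I) * (C' * M ^ d))) * t ^ card D + (C0 * P) * (card I - 1) ^ card D"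
        proof (rule block_step[where \<pi> = \<pi>])
          show "finite D" "finite I" "t \<ge> 1" using finD finI t1 by auto
          show "card Y \<le> C' * M ^ d" if "i \<in> D" "Y \<subseteq> grid (D - {i}) M" "\<not> contains (D - {i}) I \<pi> Y" for i Y
            using Cl that by blast
          show "card Y \<le> C0 * P" if "Y \<subseteq> grid D M" "\<not> contains D I \<pi> Y" for Y
            using Suc.IH that unfolding M_def P_def by blast
          show "X \<subseteq> grid D (M * t)" using XG unfolding M_def by (simp add: mult.commute)
          show "\<not> contains D I \<pi> X" by fact
        qed
        also have "\<dots> = (K * t ^ k + C0 * (N - 1) ^ k) * P"
          unfolding K_def N_def k_def MP[symmetric] by (simp add: algebra_simps)
        also have "\<dots> \<le> (C0 * t ^ Suc d) * P"
          by (intro mult_le_mono1 arith_key[OF t_def C0_def])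
        also have "\<dots> = C0 * t ^ (Suc j * Suc d)" unfolding P_def by (simp add: power_add algebra_simps)
        finally show "card X \<le> C0 * t ^ (Suc j * Suc d)" .
      qed
    qed
    show ?thesis
    proof (intro exI[of _ "C0 * t ^ Suc d"] allI impI)
      fix m X assume XG: "X \<subseteq> grid D m" and Xn: "\<not> contains D I \<pi> X"
      show "card X \<le> C0 * t ^ Suc d * m ^ Suc d"
      proof (cases "m = 0")
        case True
        have "D \<noteq> {}" using Suc.prems by auto
        then obtain c where "c \<in> D" by blast
        then have "grid D m = {}" unfolding grid_def using True by (auto simp: PiE_eq_empty_iff)
        then show ?thesis using XG by simp
      next
        case False
        then have "m \<ge> 1" by simp
        then obtain j where j: "m \<le> t ^ j" "t ^ j \<le> t * m" using exists_pow_between[OF t1] by blast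
        have "X \<subseteq> grid D (t ^ j)" using XG j(1) unfolding grid_def by (auto simp: PiE_iff intro: less_le_trans)
        then have "card X \<le> C0 * t ^ (j * Suc d)" using main Xn by blast
        also have "\<dots> = C0 * (t ^ j) ^ Suc d" by (simp only: power_mult)
        also have "\<dots> \<le> C0 * (t * m) ^ Suc d" using j(2) by (intro mult_le_mono2 power_mono) auto
        also have "\<dots> = C0 * t ^ Suc d * m ^ Suc d" by (simp only: power_mult_distrib mult.assoc)
        finally show ?thesis .
      qed
    qed
  qed
qed




lemma dim_lower:
  assumes R: "realizer A R k' L"
    and ab: "\<And>i. i < k \<Longrightarrow> a i \<in> A \<and> b i \<in> A"
    and nab: "\<And>i. i < k \<Longrightarrow> (a i, b i) \<notin> R"
    and cross: "\<And>i j. i < k \<Longrightarrow> j < k \<Longrightarrow> i \<noteq> j \<Longrightarrow> (a i, b j) \<in> R"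
  shows "k \<le> k'"
proof -
  have Rdef: "R = {p \<in> A \<times> A. \<forall>i<k'. p \<in> L i}" and lin: "\<And>l. l < k' \<Longrightarrow> linear_extension A R (L l)"
    using R unfolding realizer_def by auto
  have ex: "\<exists>l. l < k' \<and> (a i, b i) \<notin> L l" if "i < k" for i
    using nab[OF that] ab[OF that] Rdef by auto
  define g where "g i = (SOME l. l < k' \<and> (a i, b i) \<notin> L l)" for i
  have g: "g i < k' \<and> (a i, b i) \<notin> L (g i)" if "i < k" for i
    using someI_ex[OF ex[OF that]] unfolding g_def .
  have rev: "(b i, a i) \<in> L (g i)" if "i < k" for i
  proof -
    have "linear_order_on A (L (g i))" using lin g that unfolding linear_extension_def by auto
    then have "total_on A (L (g i))" "refl_on A (L (g i))"
      unfolding linear_order_on_def partial_order_on_def preorder_on_def by auto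
    then show ?thesis using g[OF that] ab[OF that] unfolding total_on_def refl_on_def by metis
  qed
  have "inj_on g {..<k}"
  proof (rule inj_onI)
    fix i j assume ij: "i \<in> {..<k}" "j \<in> {..<k}" "g i = g j"
    show "i = j"
    proof (rule ccontr)
      assume ne: "i \<noteq> j"
      let ?l = "g i"
      have "linear_extension A R (L ?l)" using lin g ij by auto
      then have tr: "trans (L ?l)" and sub: "R \<subseteq> L ?l"
        unfolding linear_extension_def linear_order_on_def partial_order_on_def preorder_on_def by auto
      have 1: "(a i, b j) \<in> L ?l" using cross ij ne sub by auto
      have 2: "(b j, a j) \<in> L ?l" using rev ij by auto
      have 3: "(a j, b i) \<in> L ?l" using cross ij ne sub by auto
      have "(a i, b i) \<in> L ?l" using 1 2 3 tr unfolding trans_def by blast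
      moreover have "(a i, b i) \<notin> L (g i)" using g[of i] ij(1) by simp
      ultimately show False by simp
    qed
  qed
  moreover have "g ` {..<k} \<subseteq> {..<k'}" using g by auto
  ultimately have "card {..<k} \<le> card {..<k'}" by (intro card_inj_on_le) auto
  then show ?thesis by simp
qed

lemma mod_key_inj: "(s::nat) < n \<Longrightarrow> s' < n \<Longrightarrow> A * n + s = A' * n + s' \<Longrightarrow> s = s'"
  by (metis mod_mult_self3 mod_less)

lemma key_less: "(s::nat) < n \<Longrightarrow> A < A' \<Longrightarrow> A * n + s < A' * n + s'"
proof -
  assume "s < n" "A < A'"
  then have "A * n + s < A * n + n" by simp
  also have "\<dots> = Suc A * n" by simp
  also have "\<dots> \<le> A' * n" using \<open>A < A'\<close> by (intro mult_le_mono1) simp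
  finally show ?thesis by simp
qed

lemma linear_from_key:
  fixes key :: "'a \<Rightarrow> nat"
  assumes "inj_on key S"
  shows "linear_order_on S {(s, s'). s \<in> S \<and> s' \<in> S \<and> key s \<le> key s'}"
  using assms unfolding linear_order_on_def partial_order_on_def preorder_on_def refl_on_def
    trans_def antisym_def total_on_def inj_on_def
  by auto




definition pi0 :: "nat \<Rightarrow> nat \<Rightarrow> nat \<Rightarrow> nat" where
  "pi0 k c x = (if x < k then (if x = c then k + 1 else x) else (if x - k = c then k else k + 2 + (x - k)))"

lemma pi0_cross: "i < k \<Longrightarrow> j < k \<Longrightarrow> i \<noteq> j \<Longrightarrow> pi0 k c i < pi0 k c (k + j)"
  unfolding pi0_def by auto

lemma pi0_diag: "i < k \<Longrightarrow> pi0 k i (k + i) < pi0 k i i"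
  unfolding pi0_def by auto

lemma dim_empty: "poset_dim {} (induced r {}) = 0"
proof -
  have "realizer {} (induced r {}) 0 L" for L
    unfolding realizer_def induced_def by auto
  then show ?thesis unfolding poset_dim_def by (metis (mono_tags, lifting) Least_le le_zero_eq)
qed

lemma poset_bound:
  fixes d C m n :: nat
  assumes C: "\<forall>m X. X \<subseteq> grid {..<Suc d} m \<longrightarrow> \<not> contains {..<Suc d} {..<2 * Suc d} (pi0 (Suc d)) X \<longrightarrow> card X \<le> C * m ^ d"
    and nm: "n \<le> m ^ Suc d"
  shows "f_dim d n \<le> C * m ^ d"
proof -
  define k where "k = Suc d"
  define D where "D = {..<k}"
  define G where "G = grid D m"
  have finG: "finite G" unfolding G_def D_def by (rule finite_grid) simp
  have cardG: "card G = m ^ k" unfolding G_def D_def by (simp add: card_grid)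
  obtain h where h: "bij_betw h {0..<card G} G" using ex_bij_betw_nat_finite[OF finG] by blast
  have hinj: "inj_on h {..<n}" using h nm cardG unfolding bij_betw_def k_def
    by (metis atLeast0LessThan inj_on_subset lessThan_subset_iff)
  have hG: "h x \<in> G" if "x < n" for x using h nm cardG that unfolding bij_betw_def k_def by auto
  have hPiE: "h x \<in> (\<Pi>\<^sub>E c\<in>D. {..<m})" if "x < n" for x using hG[OF that] unfolding G_def grid_def .
  have hext: "x = y" if "x < n" "y < n" "\<And>c. c < k \<Longrightarrow> h x c = h y c" for x y
  proof -
    have "h x = h y" by (rule PiE_ext[OF hPiE[OF that(1)] hPiE[OF that(2)]]) (use that(3) D_def in auto)
    then show ?thesis using hinj that(1,2) unfolding inj_on_def by auto
  qed
  define le where "le x y \<longleftrightarrow> (\<forall>c<k. h x c \<le> h y c)" for x y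
  define r where "r = {(x, y). x < n \<and> y < n \<and> le x y}"
  have po: "partial_order_on {..<n} r"
    unfolding partial_order_on_def preorder_on_def refl_on_def trans_def antisym_def r_def
  proof (intro conjI)
    show "\<forall>x y. (x, y) \<in> {(x, y). x < n \<and> y < n \<and> le x y} \<longrightarrow> (y, x) \<in> {(x, y). x < n \<and> y < n \<and> le x y} \<longrightarrow> x = y"
      unfolding le_def by clarify (rule hext; auto intro: order_antisym)
  qed (auto simp: le_def intro: order_trans)
  have big: "\<not> poset_dim S (induced r S) \<le> d" if S: "S \<subseteq> {..<n}" "C * m ^ d < card S" for S
  proof
    assume dimS: "poset_dim S (induced r S) \<le> d"
    define R where "R = induced r S"
    define X where "X = h ` S"
    have injS: "inj_on h S" using hinj S(1) inj_on_subset by blast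
    have "X \<subseteq> grid {..<Suc d} m" using hG S(1) unfolding X_def G_def D_def k_def by auto
    moreover have "card X = card S" unfolding X_def using card_image[OF injS] .
    ultimately have "contains {..<Suc d} {..<2 * Suc d} (pi0 (Suc d)) X" using C S(2) by force
    then obtain \<phi> where \<phi>: "\<forall>i\<in>{..<2 * k}. \<phi> i \<in> X"
      "\<forall>c\<in>{..<k}. \<forall>i\<in>{..<2*k}. \<forall>j\<in>{..<2*k}. pi0 k c i < pi0 k c j \<longrightarrow> \<phi> i c < \<phi> j c"
      unfolding contains_def k_def by blast
    define \<sigma> where "\<sigma> i = (SOME s. s \<in> S \<and> h s = \<phi> i)" for i
    have \<sigma>: "\<sigma> i \<in> S \<and> h (\<sigma> i) = \<phi> i" if "i < 2 * k" for i
    proof -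
      have "\<phi> i \<in> h ` S" using \<phi>(1) that X_def by auto
      then have "\<exists>s. s \<in> S \<and> h s = \<phi> i" by (metis imageE)
      from someI_ex[OF this] show ?thesis unfolding \<sigma>_def .
    qed
    define a where "a i = \<sigma> i" for i
    define b where "b i = \<sigma> (k + i)" for i
    have abS: "a i \<in> S \<and> b i \<in> S" if "i < k" for i using \<sigma> that unfolding a_def b_def by auto
    have abn: "a i < n \<and> b i < n" if "i < k" for i using abS[OF that] S(1) by auto
    have nab: "(a i, b i) \<notin> R" if i: "i < k" for i
    proof
      assume "(a i, b i) \<in> R"
      then have "h (a i) i \<le> h (b i) i" unfolding R_def induced_def r_def le_def using i by auto
      moreover have "\<phi> (k + i) i < \<phi> i i" using \<phi>(2) pi0_diag[OF i] i by auto
      ultimately show False using \<sigma> i unfolding a_def b_def by auto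
    qed
    have cross: "(a i, b j) \<in> R" if ij: "i < k" "j < k" "i \<noteq> j" for i j
    proof -
      have "h (a i) c \<le> h (b j) c" if c: "c < k" for c
      proof -
        have "\<phi> i c < \<phi> (k + j) c" using \<phi>(2) pi0_cross[OF ij, of c] c ij by auto
        then show ?thesis using \<sigma> ij unfolding a_def b_def by auto
      qed
      then show ?thesis unfolding R_def induced_def r_def le_def using abS abn ij by auto
    qed
    define W where "W = k * m + 1"
    define A where "A c s = W * h s c + (\<Sum>l<k. h s l)" for c s
    define key where "key c s = A c s * n + s" for c s
    define L where "L c = {(s, s'). s \<in> S \<and> s' \<in> S \<and> key c s \<le> key c s'}" for c
    have sum_lt: "(\<Sum>l<k. h s l) < W" if "s < n" for s
    proof -
      have "(\<Sum>l<k. h s l) \<le> (\<Sum>l<k. m)" using hPiE[OF that] unfolding D_def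
        by (intro sum_mono) (auto simp: PiE_iff less_imp_le)
      then show ?thesis unfolding W_def by simp
    qed
    have A_less: "A c s' < A c s" if "s < n" "s' < n" "h s' c < h s c" for c s s'
    proof -
      have "A c s' < W * h s' c + W" unfolding A_def using sum_lt[OF that(2)] by simp
      also have "\<dots> = W * Suc (h s' c)" by simp
      also have "\<dots> \<le> W * h s c" using that(3) by (intro mult_le_mono2) simp
      also have "\<dots> \<le> A c s" unfolding A_def by simp
      finally show ?thesis .
    qed
    have key_inj: "inj_on (key c) S" for c
    proof (rule inj_onI)
      fix s s' assume "s \<in> S" "s' \<in> S" "key c s = key c s'"
      then show "s = s'" using S(1) mod_key_inj unfolding key_def by blast
    qed
    have RL: "R \<subseteq> L c" if c: "c < k" for c
    proof
      fix p assume "p \<in> R"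
      then obtain s s' where p: "p = (s, s')" "s \<in> S" "s' \<in> S" "le s s'" "s < n" "s' < n"
        unfolding R_def induced_def r_def by auto
      have le1: "h s c \<le> h s' c" using p(4) c unfolding le_def by auto
      have le2: "(\<Sum>l<k. h s l) \<le> (\<Sum>l<k. h s' l)" using p(4) unfolding le_def by (intro sum_mono) auto
      have "key c s \<le> key c s'"
      proof (cases "A c s < A c s'")
        case True then show ?thesis unfolding key_def using key_less[OF p(5)] less_imp_le by blast
      next
        case False
        then have eq1: "(\<Sum>l<k. h s l) = (\<Sum>l<k. h s' l)"
          using le1 le2 mult_le_mono2[OF le1, of W] unfolding A_def by linarith
        have "\<forall>l<k. h s l = h s' l"
        proof (intro allI impI)
          fix l assume "l < k"
          show "h s l = h s' l"
            by (rule sum_mono_inv[OF eq1, of l]) (use p(4) \<open>l < k\<close> le_def in auto)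
        qed
        then have "s = s'" using hext p(5,6) by blast
        then show ?thesis by simp
      qed
      then show "p \<in> L c" unfolding L_def using p by auto
    qed
    have real: "realizer S R k L"
      unfolding realizer_def
    proof (intro conjI allI impI)
      fix c assume c: "c < k"
      show "linear_extension S R (L c)"
        unfolding linear_extension_def L_def using linear_from_key[OF key_inj] RL[OF c] unfolding L_def by auto
    next
      show "R = {p \<in> S \<times> S. \<forall>i<k. p \<in> L i}"
      proof
        show "R \<subseteq> {p \<in> S \<times> S. \<forall>i<k. p \<in> L i}" using RL unfolding R_def induced_def by auto
      next
        show "{p \<in> S \<times> S. \<forall>i<k. p \<in> L i} \<subseteq> R"
        proof
          fix p assume p: "p \<in> {p \<in> S \<times> S. \<forall>i<k. p \<in> L i}"
          then obtain s s' where ss: "p = (s, s')" "s \<in> S" "s' \<in> S" by auto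
          have sn: "s < n" "s' < n" using ss S(1) by auto
          have "le s s'"
            unfolding le_def
          proof (intro allI impI)
            fix c assume c: "c < k"
            show "h s c \<le> h s' c"
            proof (rule ccontr)
              assume "\<not> h s c \<le> h s' c"
              then have "A c s' < A c s" using A_less sn by simp
              then have "key c s' < key c s" unfolding key_def using key_less[OF sn(2)] by blast
              moreover have "key c s \<le> key c s'" using p ss c unfolding L_def by auto
              ultimately show False by simp
            qed
          qed
          then show "p \<in> R" using ss sn unfolding R_def induced_def r_def by auto
        qed
      qed
    qed
    then have "\<exists>L. realizer S R k L" by blast
    have "\<exists>k'. \<exists>L. realizer S R k' L" using real by blast
    then obtain L' where L': "realizer S R (poset_dim S R) L'"
      unfolding poset_dim_def using LeastI_ex[of "\<lambda>k'. \<exists>L. realizer S R k' L"] by blast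
    have "k \<le> poset_dim S R"
      by (rule dim_lower[OF L', of k a b]) (use abS nab cross in auto)
    then show False using dimS unfolding R_def k_def by simp
  qed
  define Q where "Q m' \<longleftrightarrow> (\<forall>r. partial_order_on {..<n} r \<longrightarrow>
       (\<exists>S \<subseteq> {..<n}. card S = m' \<and> poset_dim S (induced r S) \<le> d))" for m'
  have Q0: "Q 0" unfolding Q_def by (intro allI impI exI[of _ "{}"]) (simp add: dim_empty)
  have Qb: "y \<le> n" if "Q y" for y
  proof -
    have "\<exists>S \<subseteq> {..<n}. card S = y \<and> poset_dim S (induced r S) \<le> d"
      using that unfolding Q_def using po by (elim allE impE) 
    then obtain S where "S \<subseteq> {..<n}" "card S = y" by (elim exE conjE)
    then show ?thesis using card_mono[of "{..<n}" S] by simp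
  qed
  have "Q (Greatest Q)" by (rule GreatestI_nat[of Q 0 n, OF Q0 Qb])
  then have "\<exists>S \<subseteq> {..<n}. card S = Greatest Q \<and> poset_dim S (induced r S) \<le> d"
    unfolding Q_def using po by (elim allE impE)
  then obtain S where S: "S \<subseteq> {..<n}" "card S = Greatest Q" "poset_dim S (induced r S) \<le> d"
    by (elim exE conjE)
  have fd: "f_dim d n = Greatest Q" unfolding f_dim_def Q_def ..
  have "\<not> C * m ^ d < card S" using big[OF S(1)] S(3) by blast
  then show ?thesis using fd S(2) by simp
qed




lemma m_bounds:
  fixes n k :: nat
  assumes "n \<ge> 1" "k \<ge> 1"
  defines "x \<equiv> real n powr (1 / real k)"
  defines "m \<equiv> nat \<lceil>x\<rceil>"
  shows "n \<le> m ^ k" and "real m \<le> 2 * x" and "x \<ge> 1"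
    and "\<And>j. x ^ j = real n powr (real j / real k)"
proof -
  have x1: "x \<ge> 1" unfolding x_def using assms(1) by (intro ge_one_powr_ge_zero) auto
  then show "x \<ge> 1" .
  have xp: "x ^ j = real n powr (real j / real k)" for j
  proof -
    have "x ^ j = x powr real j" using x1 by (simp add: powr_realpow)
    also have "\<dots> = real n powr (1 / real k * real j)" unfolding x_def by (simp add: powr_powr)
    finally show ?thesis by simp
  qed
  then show "\<And>j. x ^ j = real n powr (real j / real k)" .
  have "x \<le> real m" unfolding m_def by (rule real_nat_ceiling_ge)
  then have "x ^ k \<le> real m ^ k" using x1 by (intro power_mono) auto
  moreover have "x ^ k = real n" using xp[of k] assms by simp
  ultimately have "real n \<le> real (m ^ k)" by simp
  then show "n \<le> m ^ k" by linarith
  have "real m \<le> x + 1" unfolding m_def using x1 by linarith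
  then show "real m \<le> 2 * x" using x1 by simp
qed

theorem theorem2:
  fixes d :: nat
  assumes "d > 0"
  shows "(\<lambda>n. real (f_dim d n)) \<in> O(\<lambda>n. real n powr (real d / real (d + 1)))"
proof -
  obtain C where C: "\<forall>m X. X \<subseteq> grid {..<Suc d} m \<longrightarrow> \<not> contains {..<Suc d} {..<2 * Suc d} (pi0 (Suc d)) X \<longrightarrow> card X \<le> C * m ^ d"
    using extremal[of "{..<2 * Suc d}" "{..<Suc d}" d "pi0 (Suc d)"] by auto
  have bound: "real (f_dim d n) \<le> (real C * 2 ^ d) * real n powr (real d / real (d + 1))" if n: "n \<ge> 1" for n
  proof -
    define x where "x = real n powr (1 / real (Suc d))"
    define m where "m = nat \<lceil>x\<rceil>"
    have mb: "n \<le> m ^ Suc d" "real m \<le> 2 * x" "x \<ge> 1" "x ^ d = real n powr (real d / real (Suc d))"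
      using m_bounds[OF n, of "Suc d"] unfolding x_def m_def by auto
    have "f_dim d n \<le> C * m ^ d" by (rule poset_bound[OF C mb(1)])
    then have "real (f_dim d n) \<le> real C * real m ^ d" by (metis of_nat_le_iff of_nat_mult of_nat_power)
    also have "\<dots> \<le> real C * (2 * x) ^ d" using mb by (intro mult_left_mono power_mono) auto
    also have "\<dots> = (real C * 2 ^ d) * x ^ d" by (simp add: power_mult_distrib)
    also have "\<dots> = (real C * 2 ^ d) * real n powr (real d / real (d + 1))" using mb(4) by simp
    finally show ?thesis .
  qed
  show ?thesis
  proof (rule bigoI[where c = "real C * 2 ^ d"])
    show "\<forall>\<^sub>F n in at_top. norm (real (f_dim d n)) \<le> (real C * 2 ^ d) * norm (real n powr (real d / real (d + 1)))"
      using eventually_ge_at_top[of "1::nat"] by eventually_elim (use bound in auto)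
  qed
qed


end
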